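(* For every $m\ge 2$ and $n\ge 2$, the $m$th order $n$-dimensional Pascal tensor is strongly completely positive.
   Context: The $m$th order $n$-dimensional Pascal tensor is $\mathcal{P}=(p_{i_1\dots i_m})$ with $p_{i_1\dots i_m}=\frac{(i_1+\dots+i_m-m)!}{(i_1-1)!\cdots(i_m-1)!}$ for $i_1,\dots,i_m\in\{1,\dots,n\}$ (for $m=2$ this is the symmetric Pascal matrix). For $\mathbf{u}\in\mathbb{R}^n$, $\mathbf{u}^m$ is the tensor with entries $u_{i_1}\cdots u_{i_m}$. A symmetric tensor $\mathcal{A}$ of order $m$ and dimension $n$ is strongly completely positive if there are nonnegative vectors $\mathbf{u}^{(1)},\dots,\mathbf{u}^{(r)}\in\mathbb{R}^n$ spanning $\mathbb{R}^n$ such that $\mathcal{A}=(\mathbf{u}^{(1)})^m+\dots+(\mathbf{u}^{(r)})^m$. *)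

theory Defs
  imports "HOL-Analysis.Analysis"
begin

(* Conventions: indices are 0-based. A multi-index of an m-th order n-dimensional
   tensor is a function j :: nat \<Rightarrow> nat with j k < n for all k < m
   (j k = i_(k+1) - 1 in the paper's 1-based notation). A tensor is a function
   from multi-indices to reals; only its values on valid multi-indices matter.
   A vector in R^n is a function nat \<Rightarrow> real, only its values on {0..<n} matter. *)

definition valid_index :: "nat \<Rightarrow> nat \<Rightarrow> (nat \<Rightarrow> nat) \<Rightarrow> bool" where
  "valid_index m n j \<longleftrightarrow> (\<forall>k<m. j k < n)"

(* p_{i_1...i_m} = (i_1+...+i_m-m)! / ((i_1-1)!...(i_m-1)!) *)
definition pascal_tensor :: "nat \<Rightarrow> (nat \<Rightarrow> nat) \<Rightarrow> real" where
  "pascal_tensor m j = fact (\<Sum>k<m. j k) / (\<Prod>k<m. fact (j k))"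

definition tensor_power :: "nat \<Rightarrow> (nat \<Rightarrow> real) \<Rightarrow> (nat \<Rightarrow> nat) \<Rightarrow> real" where
  "tensor_power m u j = (\<Prod>k<m. u (j k))"

definition spans_Rn :: "nat \<Rightarrow> (nat \<Rightarrow> real) list \<Rightarrow> bool" where
  "spans_Rn n us \<longleftrightarrow>
     (\<forall>x :: nat \<Rightarrow> real. \<exists>c :: nat \<Rightarrow> real.
        \<forall>i<n. x i = (\<Sum>l<length us. c l * (us ! l) i))"

definition strongly_completely_positive ::
  "nat \<Rightarrow> nat \<Rightarrow> ((nat \<Rightarrow> nat) \<Rightarrow> real) \<Rightarrow> bool" where
  "strongly_completely_positive m n A \<longleftrightarrow>
     (\<forall>j j'. valid_index m n j \<longrightarrow> valid_index m n j' \<longrightarrow>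
        (\<exists>\<sigma>. \<sigma> permutes {..<m} \<and> (\<forall>k<m. j' k = j (\<sigma> k))) \<longrightarrow> A j = A j') \<and>
     (\<exists>us :: (nat \<Rightarrow> real) list.
        (\<forall>u\<in>set us. \<forall>i<n. u i \<ge> 0) \<and>
        spans_Rn n us \<and>
        (\<forall>j. valid_index m n j \<longrightarrow> A j = (\<Sum>u\<leftarrow>us. tensor_power m u j)))"

end

theory Submission
  imports Defs "HOL-Computational_Algebra.Polynomial"
begin

definition Lf :: "nat \<Rightarrow> real poly \<Rightarrow> real" where
  "Lf B p = (\<Sum>s<B. coeff p s * fact s)"

lemma Lf_add: "Lf B (p + q) = Lf B p + Lf B q"
  by (simp add: Lf_def algebra_simps sum.distrib)
lemma Lf_smult: "Lf B (smult c p) = c * Lf B p"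
  by (simp add: Lf_def sum_distrib_left mult.assoc)
lemma Lf_minus: "Lf B (- p) = - Lf B p"
  by (simp add: Lf_def sum_negf)
lemma Lf_diff: "Lf B (p - q) = Lf B p - Lf B q"
  by (simp add: Lf_def algebra_simps sum_subtractf)
lemma Lf_0[simp]: "Lf B 0 = 0" by (simp add: Lf_def)
lemma pderiv_sum': "pderiv (sum f A) = (\<Sum>a\<in>A. pderiv (f a))"
  by (induction A rule: infinite_finite_induct) (auto simp: pderiv_add)
lemma Lf_sum: "Lf B (sum f A) = (\<Sum>a\<in>A. Lf B (f a))"
  by (induction A rule: infinite_finite_induct) (auto simp: Lf_add)
lemma Lf_monom: "a < B \<Longrightarrow> Lf B (monom c a) = c * fact a"
proof -
  assume a: "a < B"
  have "Lf B (monom c a) = (\<Sum>s<B. if s = a then c * fact a else 0)"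
    unfolding Lf_def by (rule sum.cong) (auto simp: coeff_monom)
  also have "\<dots> = c * fact a" using a by simp
  finally show ?thesis .
qed

lemma coeff_higher_pderiv:
  "coeff ((pderiv ^^ k) p) i = fact (i+k) / fact i * coeff (p :: real poly) (i+k)"
proof (induction k arbitrary: p)
  case 0 then show ?case by simp
next
  case (Suc k)
  have "coeff ((pderiv ^^ Suc k) p) i = coeff ((pderiv ^^ k) (pderiv p)) i"
    by (simp add: funpow_Suc_right del: funpow.simps)
  also have "\<dots> = fact (i+k) / fact i * (of_nat (Suc (i+k)) * coeff p (Suc (i+k)))"
    using Suc by (simp add: coeff_pderiv)
  also have "\<dots> = fact (i + Suc k) / fact i * coeff p (i + Suc k)"
    by (simp add: fact_Suc field_simps)
  finally show ?case .
qed

lemma Lf_pos: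
  fixes p :: "real poly"
  assumes p0: "p \<noteq> 0" and dB: "degree p < B" and nn: "\<And>x. x \<ge> 0 \<Longrightarrow> poly p x \<ge> 0"
  shows "Lf B p > 0"
proof -
  define F where "F = (\<Sum>k<B. (pderiv ^^ k) p)"
  have F0: "poly F 0 = Lf B p"
    by (simp add: F_def poly_0_coeff_0 coeff_sum coeff_higher_pderiv Lf_def mult.commute)
  have hB: "(pderiv ^^ B) p = 0"
  proof (rule poly_eqI)
    fix i show "coeff ((pderiv ^^ B) p) i = coeff 0 i"
      using dB by (simp add: coeff_higher_pderiv coeff_eq_0)
  qed
  have "pderiv F = (\<Sum>k<B. pderiv ((pderiv ^^ k) p))"
    unfolding F_def by (rule pderiv_sum')
  then have dF: "pderiv F = (\<Sum>k<B. (pderiv ^^ Suc k) p)" by simp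
  have FpF: "F - pderiv F = p"
  proof -
    have "F - pderiv F = - (\<Sum>k<B. (pderiv ^^ Suc k) p - (pderiv ^^ k) p)"
      unfolding dF by (simp add: F_def sum_subtractf)
    also have "\<dots> = p" by (subst sum_lessThan_telescope) (simp add: hB)
    finally show ?thesis .
  qed
  define d where "d = degree p"
  have lcp: "lead_coeff p > 0"
  proof (rule ccontr)
    assume "\<not> lead_coeff p > 0"
    then have "lead_coeff (-p) > 0" using p0 by (simp add: less_le)
    from poly_pinfty_gt_lc[OF this] obtain n0 where n0: "\<And>x. x \<ge> n0 \<Longrightarrow> poly (-p) x \<ge> lead_coeff (-p)" by blast
    have "poly (-p) (max n0 0) > 0" using n0[of "max n0 0"] \<open>lead_coeff (-p) > 0\<close> by simp
    with nn[of "max n0 0"] show False by simp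
  qed
  have degF: "degree F \<le> d"
    unfolding F_def d_def by (rule degree_sum_le) (auto simp: degree_higher_pderiv)
  have "coeff F d = coeff p d + coeff (pderiv F) d"
    using FpF by (metis coeff_add diff_add_cancel)
  also have "coeff (pderiv F) d = 0" using degF by (simp add: coeff_pderiv coeff_eq_0)
  finally have cFd: "coeff F d = lead_coeff p" by (simp add: d_def)
  have "degree F = d" using degF cFd lcp by (metis le_antisym le_degree less_irrefl)
  then have lcF: "lead_coeff F > 0" using cFd lcp by simp
  from poly_pinfty_gt_lc[OF this] obtain n0 where n0: "\<And>x. x \<ge> n0 \<Longrightarrow> poly F x \<ge> lead_coeff F" by blast
  define X where "X = max n0 0"
  have FX: "poly F X > 0" using n0[of X] lcF by (simp add: X_def)
  define G where "G = (\<lambda>x. exp (-x) * poly F x)"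
  have "G 0 \<ge> G X"
  proof (rule DERIV_nonpos_imp_nonincreasing[of 0 X G])
    show "0 \<le> X" by (simp add: X_def)
    fix x :: real assume x: "0 \<le> x" "x \<le> X"
    have "DERIV G x :> (- exp (-x)) * poly F x + exp (-x) * poly (pderiv F) x"
      unfolding G_def by (auto intro!: derivative_eq_intros)
    moreover have "(- exp (-x)) * poly F x + exp (-x) * poly (pderiv F) x = - (exp (-x) * poly p x)"
      using FpF by (metis (no_types, lifting) add_diff_cancel_left' diff_diff_eq2 distrib_left
          minus_diff_eq mult_minus_left poly_diff uminus_add_conv_diff)
    moreover have "- (exp (-x) * poly p x) \<le> 0" using nn[OF x(1)] by simp
    ultimately show "\<exists>y. DERIV G x :> y \<and> y \<le> 0" by metis
  qed
  moreover have "G X > 0" using FX by (simp add: G_def)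
  ultimately show ?thesis using F0 by (simp add: G_def)
qed

lemma sign_definite:
  fixes g :: "real poly"
  assumes "g \<noteq> 0" "\<And>x. x \<ge> 0 \<Longrightarrow> poly g x = 0 \<Longrightarrow> even (order x g)"
  shows "(\<forall>x\<ge>0. poly g x \<ge> 0) \<or> (\<forall>x\<ge>0. poly g x \<le> 0)"
  using assms
proof (induction "degree g" arbitrary: g rule: less_induct)
  case less
  show ?case
  proof (cases "\<exists>x0\<ge>0. poly g x0 = 0")
    case True
    then obtain x0 where x0: "x0 \<ge> 0" "poly g x0 = 0" by blast
    have "order x0 g \<noteq> 0" using x0 less.prems(1) by (simp add: order_root)
    moreover have "even (order x0 g)" using less.prems(2) x0 by blast
    ultimately have o2: "2 \<le> order x0 g" by presburger
    have "[:-x0,1:]^2 dvd g"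
      using order_1[of x0 g] o2 by (meson dvd_trans le_imp_power_dvd)
    then obtain h where h: "g = [:-x0,1:]^2 * h" by (elim dvdE)
    have h0: "h \<noteq> 0" using h less.prems(1) by auto
    have dh: "degree g = 2 + degree h" using h h0 by (simp add: degree_mult_eq degree_power_eq)
    have "(\<forall>x\<ge>0. poly h x \<ge> 0) \<or> (\<forall>x\<ge>0. poly h x \<le> 0)"
    proof (rule less.hyps)
      show "degree h < degree g" using dh by simp
      show "h \<noteq> 0" by fact
      fix x :: real assume x: "x \<ge> 0" "poly h x = 0"
      have "order x g = order x ([:-x0,1:]^2) + order x h"
        using h less.prems(1) by (simp add: order_mult)
      moreover have "order x g = order x g" ..
      moreover have "even (order x g)" using less.prems(2) x h by simp
      moreover have "even (order x ([:-x0,1:]^2))"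
      proof (cases "x = x0")
        case True then show ?thesis by (simp add: order_power_n_n)
      next
        case False then have "poly ([:-x0,1:]^2) x \<noteq> 0" by simp
        then show ?thesis by (simp add: order_0I)
      qed
      ultimately show "even (order x h)" by simp
    qed
    then show ?thesis
    proof
      assume "\<forall>x\<ge>0. poly h x \<ge> 0"
      then have "\<forall>x\<ge>0. poly g x \<ge> 0" by (simp add: h)
      then show ?thesis ..
    next
      assume "\<forall>x\<ge>0. poly h x \<le> 0"
      then have "\<forall>x\<ge>0. poly g x \<le> 0" by (simp add: h mult_nonneg_nonpos)
      then show ?thesis ..
    qed
  next
    case False
    show ?thesis
    proof (rule ccontr)
      assume "\<not> ?thesis"
      then obtain a b where ab: "a \<ge> 0" "poly g a < 0" "b \<ge> 0" "poly g b > 0"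
        by (auto simp: not_le)
      have "a \<noteq> b" using ab by auto
      then consider "a < b" | "b < a" by linarith
      then show False
      proof cases
        case 1
        from poly_IVT_pos[OF 1 ab(2) ab(4)] obtain x where "a < x" "poly g x = 0" by blast
        then show False using False ab by auto
      next
        case 2
        from poly_IVT_neg[OF 2 ab(4) ab(2)] obtain x where "b < x" "poly g x = 0" by blast
        then show False using False ab by auto
      qed
    qed
  qed
qed

lemma dvd_pderiv_lin:
  fixes p :: "real poly"
  assumes "[:-a,1:]^Suc n dvd p" shows "[:-a,1:]^n dvd pderiv p"
proof -
  from assms obtain s where s: "p = [:-a,1:]^Suc n * s" by (elim dvdE)
  have "pderiv p = [:-a,1:]^Suc n * pderiv s + s * (smult (of_nat (Suc n)) ([:-a,1:]^n) * pderiv [:-a,1:])"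
    unfolding s pderiv_mult pderiv_power_Suc by simp
  also have "\<dots> = [:-a,1:]^n * ([:-a,1:] * pderiv s + s * smult (of_nat (Suc n)) (pderiv [:-a,1:]))"
    by (simp add: algebra_simps)
  finally show ?thesis by simp
qed

lemma dvd_higher_pderiv_lin:
  fixes p :: "real poly"
  shows "[:-a,1:]^(r+k) dvd p \<Longrightarrow> [:-a,1:]^r dvd (pderiv ^^ k) p"
proof (induction k arbitrary: p)
  case 0 then show ?case by simp
next
  case (Suc k)
  have "[:-a,1:]^(r+k) dvd pderiv p"
    using Suc.prems by (intro dvd_pderiv_lin) simp
  from Suc.IH[OF this] show ?case by (simp add: funpow_Suc_right del: funpow.simps)
qed

lemma higher_pderiv_monom:
  "(pderiv ^^ k) (monom (a::real) (j+k)) = monom (a * fact (j+k) / fact j) j"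
  by (rule poly_eqI) (auto simp: coeff_higher_pderiv coeff_monom)

definition lagc :: "nat \<Rightarrow> nat \<Rightarrow> real" where
  "lagc N j = of_nat (N choose j) * (-1)^(N-j) / fact j"

definition lagq :: "nat \<Rightarrow> real poly" where
  "lagq N = (\<Sum>j\<le>N. monom (lagc N j) j)"

lemma linpow_expand: "([:-1,1:] :: real poly)^N = (\<Sum>j\<le>N. monom (of_nat (N choose j) * (-1)^(N-j)) j)"
proof -
  have "([:-1,1:] :: real poly) = monom 1 1 + [:-1:]" by (simp add: monom_altdef)
  then have "([:-1,1:] :: real poly)^N = (monom 1 1 + [:-1:])^N" by simp
  also have "\<dots> = (\<Sum>j\<le>N. of_nat (N choose j) * (monom 1 1)^j * [:-1:]^(N-j))"
    by (rule binomial_ring)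
  also have "\<dots> = (\<Sum>j\<le>N. monom (of_nat (N choose j) * (-1)^(N-j)) j)"
  proof (rule sum.cong[OF refl])
    fix j
    have "[:-1:]^(N-j) = ([:(-1)^(N-j):] :: real poly)" by (rule poly_const_pow)
    then show "of_nat (N choose j) * (monom 1 1)^j * [:-1:]^(N-j) = monom (of_nat (N choose j) * (-1::real)^(N-j)) j"
      by (simp add: monom_power of_nat_poly monom_altdef mult.commute flip: smult_monom)
  qed
  finally show ?thesis .
qed

lemma lagq_orth:
  assumes "k < N" "N + k < B"
  shows "Lf B (lagq N * monom 1 k) = 0"
proof -
  have "Lf B (lagq N * monom 1 k) = (\<Sum>j\<le>N. lagc N j * fact (j+k))"
    unfolding lagq_def sum_distrib_right Lf_sum
    using assms by (intro sum.cong refl) (simp add: mult_monom Lf_monom)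
  also have "\<dots> = poly ((pderiv ^^ k) (monom 1 k * [:-1,1:]^N)) 1"
  proof -
    have "monom 1 k * ([:-1,1:] :: real poly)^N = (\<Sum>j\<le>N. monom (of_nat (N choose j) * (-1)^(N-j)) (j+k))"
      unfolding linpow_expand sum_distrib_left by (simp add: mult_monom add.commute)
    then show ?thesis
      by (simp add: higher_pderiv_sum higher_pderiv_monom poly_sum poly_monom lagc_def)
  qed
  also have "\<dots> = 0"
  proof -
    have "[:-1,1:]^(N-k+k) dvd monom 1 k * ([:-1,1:] :: real poly)^N" using assms by simp
    then have "[:-1,1:]^(N-k) dvd (pderiv ^^ k) (monom 1 k * ([:-1,1:] :: real poly)^N)"
      by (rule dvd_higher_pderiv_lin)
    then obtain s where s: "(pderiv ^^ k) (monom 1 k * ([:-1,1:] :: real poly)^N) = [:-1,1:]^(N-k) * s"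
      by (elim dvdE)
    show ?thesis unfolding s using assms by simp
  qed
  finally show ?thesis .
qed

lemma coeff_lagq: "coeff (lagq N) i = (if i \<le> N then lagc N i else 0)"
  unfolding lagq_def coeff_sum by (simp add: coeff_monom)

lemma degree_lagq: "degree (lagq N) = N"
proof -
  have "degree (lagq N) \<le> N"
    by (rule degree_le) (simp add: coeff_lagq)
  moreover have "coeff (lagq N) N \<noteq> 0" by (simp add: coeff_lagq lagc_def)
  ultimately show ?thesis by (meson le_antisym le_degree)
qed

lemma lagq_nz: "lagq N \<noteq> 0"
  using coeff_lagq[of N N] by (auto simp: lagc_def)

lemma lagq_at0: "poly (lagq N) 0 \<noteq> 0"
  by (simp add: poly_0_coeff_0 coeff_lagq lagc_def)

lemma lagq_orth_gen:
  assumes "degree s < N" "2 * N \<le> B"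
  shows "Lf B (lagq N * s) = 0"
proof -
  have "lagq N * s = (\<Sum>k\<le>degree s. smult (coeff s k) (lagq N * monom 1 k))"
    apply (subst (1) poly_as_sum_of_monoms[symmetric, of s])
    apply (simp add: sum_distrib_left)
    apply (intro sum.cong refl)
  proof -
    fix k
    have "monom (coeff s k) k = smult (coeff s k) (monom 1 k)" by (simp add: smult_monom)
    then show "lagq N * monom (coeff s k) k = smult (coeff s k) (lagq N * monom 1 k)"
      by (simp add: mult_smult_right)
  qed
  also have "Lf B \<dots> = 0"
    unfolding Lf_sum Lf_smult using assms
    by (intro sum.neutral ballI) (simp add: lagq_orth)
  finally show ?thesis .
qed

lemma lagq_roots:
  assumes N: "N \<ge> 1" and B: "2 * N \<le> B"
  shows "\<exists>x. inj_on x {..<N} \<and> (\<forall>l<N. x l > 0 \<and> poly (lagq N) (x l) = 0)"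
proof -
  define q where "q = lagq N"
  define R where "R = {x. x > 0 \<and> poly q x = 0 \<and> odd (order x q)}"
  have finR: "finite R"
    using poly_roots_finite[OF lagq_nz[of N]] unfolding R_def q_def
    by (rule rev_finite_subset) auto
  have "card R \<ge> N"
  proof (rule ccontr)
    assume "\<not> card R \<ge> N"
    then have cR: "card R < N" by simp
    define P where "P = (\<Prod>y\<in>R. [:-y,1:])"
    have P0: "P \<noteq> 0" unfolding P_def using finR by auto
    have dP: "degree P = card R"
      unfolding P_def by (subst degree_prod_eq_sum_degree) auto
    have polyP: "poly P x = (\<Prod>y\<in>R. x - y)" for x
      by (simp add: P_def poly_prod)
    have ordP: "order x P = (if x \<in> R then 1 else 0)" for x
    proof (cases "x \<in> R")
      case True
      define P' where "P' = (\<Prod>y\<in>R-{x}. [:-y,1:])"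
      have Peq: "P = [:-x,1:] * P'"
        unfolding P_def P'_def using True finR by (simp add: prod.remove)
      have "poly P' x = (\<Prod>y\<in>R-{x}. x - y)" by (simp add: P'_def poly_prod)
      also have "\<dots> \<noteq> 0" using finR by (subst prod_zero_iff) auto
      finally have "order x P' = 0" by (rule order_0I)
      moreover have "order x P = order x [:-x,1:] + order x P'"
        using P0 unfolding Peq by (rule order_mult)
      ultimately have "order x P = order x [:-x,1:] + 0" by simp
      also have "order x [:-x,1:] = 1" using order_power_n_n[of x 1] by simp
      finally show ?thesis using True by simp
    next
      case False
      then have "poly P x \<noteq> 0" using finR by (auto simp: polyP)
      then show ?thesis using False by (simp add: order_0I)
    qed
    define g where "g = q * P"
    have g0: "g \<noteq> 0" using P0 lagq_nz by (simp add: g_def q_def)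
    have dg: "degree g < B" using P0 lagq_nz cR B
      by (simp add: g_def q_def degree_mult_eq degree_lagq dP)
    have Lg: "Lf B g = 0" unfolding g_def q_def
      using cR B by (intro lagq_orth_gen) (simp_all add: dP)
    have ev: "even (order x g)" if x: "x \<ge> 0" "poly g x = 0" for x
    proof -
      have "x \<noteq> 0"
      proof
        assume "x = 0"
        have "poly P 0 \<noteq> 0" using finR by (auto simp: polyP R_def)
        then show False using x \<open>x = 0\<close> lagq_at0 by (simp add: g_def q_def)
      qed
      then have xp: "x > 0" using x by simp
      have og: "order x g = order x q + order x P" using g0 by (simp add: g_def order_mult)
      show ?thesis
      proof (cases "x \<in> R")
        case True then show ?thesis using og ordP R_def by simp
      next
        case False
        then have "poly P x \<noteq> 0" using finR by (auto simp: polyP)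
        then have "poly q x = 0" using x by (simp add: g_def)
        then have "even (order x q)" using False xp by (simp add: R_def)
        then show ?thesis using og ordP False by simp
      qed
    qed
    from sign_definite[OF g0 ev] show False
    proof
      assume "\<forall>x\<ge>0. poly g x \<ge> 0"
      then have "Lf B g > 0" using g0 dg by (intro Lf_pos) auto
      then show False using Lg by simp
    next
      assume "\<forall>x\<ge>0. poly g x \<le> 0"
      then have "Lf B (-g) > 0" using g0 dg by (intro Lf_pos) auto
      then show False using Lg by (simp add: Lf_minus)
    qed
  qed
  then obtain R' where R': "R' \<subseteq> R" "card R' = N"
    by (metis obtain_subset_with_card_n)
  have "finite R'" using R' finR finite_subset by blast
  from ex_bij_betw_nat_finite[OF this] obtain x where x: "bij_betw x {0..<N} R'"
    using R' by auto
  have "inj_on x {..<N}" using x by (simp add: bij_betw_def lessThan_atLeast0)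
  moreover have "\<forall>l<N. x l > 0 \<and> poly (lagq N) (x l) = 0"
  proof (intro allI impI)
    fix l assume "l < N"
    then have "x l \<in> R" using x R' by (auto simp: bij_betw_def)
    then show "x l > 0 \<and> poly (lagq N) (x l) = 0" by (simp add: R_def q_def)
  qed
  ultimately show ?thesis by blast
qed

definition lagP :: "(nat \<Rightarrow> real) \<Rightarrow> nat \<Rightarrow> nat \<Rightarrow> real poly" where
  "lagP x M l = (\<Prod>k\<in>{..<M}-{l}. [:-x k,1:])"

lemma poly_lagP: "poly (lagP x M l) y = (\<Prod>k\<in>{..<M}-{l}. y - x k)"
  by (simp add: lagP_def poly_prod)

lemma lagP_other: "k < M \<Longrightarrow> k \<noteq> l \<Longrightarrow> poly (lagP x M l) (x k) = 0"
  unfolding poly_lagP by (rule prod_zero) auto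

lemma lagP_self: "inj_on x {..<M} \<Longrightarrow> l < M \<Longrightarrow> poly (lagP x M l) (x l) \<noteq> 0"
  unfolding poly_lagP by (subst prod_zero_iff) (auto dest: inj_onD)

lemma degree_lagP: "degree (lagP x M l) \<le> M - 1" if "l < M"
proof -
  have "degree (lagP x M l) = (\<Sum>k\<in>{..<M}-{l}. degree [:-x k,1:])"
    unfolding lagP_def by (rule degree_prod_eq_sum_degree) auto
  also have "\<dots> = card ({..<M}-{l})" by simp
  also have "\<dots> \<le> M - 1"
    using that by (simp add: card_Diff_singleton)
  finally show ?thesis .
qed

lemma lagrange:
  assumes inj: "inj_on x {..<M}" and dr: "degree r < M"
  shows "r = (\<Sum>l<M. smult (poly r (x l) / poly (lagP x M l) (x l)) (lagP x M l))"
    (is "r = ?S")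
proof (rule poly_eqI_degree[of "x ` {..<M}"])
  have cM: "card (x ` {..<M}) = M" using inj by (simp add: card_image)
  show "degree r < card (x ` {..<M})" using cM dr by simp
  have "degree ?S \<le> M - 1"
  proof (rule degree_sum_le)
    fix l assume "l \<in> {..<M}"
    then show "degree (smult (poly r (x l) / poly (lagP x M l) (x l)) (lagP x M l)) \<le> M - 1"
      using degree_lagP[of l M x] degree_smult_le order.trans by (metis lessThan_iff)
  qed simp
  then show "degree ?S < card (x ` {..<M})" using cM dr by simp
  fix y assume "y \<in> x ` {..<M}"
  then obtain k where k: "k < M" "y = x k" by auto
  have "poly ?S y = (\<Sum>l<M. poly r (x l) / poly (lagP x M l) (x l) * poly (lagP x M l) (x k))"
    using k by (simp add: poly_sum)
  also have "\<dots> = (\<Sum>l\<in>{k}. poly r (x l) / poly (lagP x M l) (x l) * poly (lagP x M l) (x k))"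
    using k by (intro sum.mono_neutral_right) (auto simp: lagP_other)
  also have "\<dots> = poly r y" using k lagP_self[OF inj k(1)] by simp
  finally show "poly r y = poly ?S y" by simp
qed

lemma quadrature:
  assumes N: "N \<ge> 1"
  shows "\<exists>(x::nat\<Rightarrow>real) (w::nat\<Rightarrow>real). inj_on x {..<N} \<and> (\<forall>l<N. x l > 0 \<and> w l > 0) \<and>
            (\<forall>a<2*N. (\<Sum>l<N. w l * x l ^ a) = fact a)"
proof -
  define B where "B = 2 * N"
  obtain x where inj: "inj_on x {..<N}" and xr: "\<And>l. l < N \<Longrightarrow> x l > 0 \<and> poly (lagq N) (x l) = 0"
    using lagq_roots[OF N, of B] by (auto simp: B_def)
  define q where "q = lagq N"
  define w where "w l = Lf B (lagP x N l) / poly (lagP x N l) (x l)" for l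
  have quad: "Lf B p = (\<Sum>l<N. w l * poly p (x l))" if dp: "degree p < B" for p
  proof -
    define d where "d = p div q"
    define r where "r = p mod q"
    have q0: "q \<noteq> 0" by (simp add: q_def lagq_nz)
    have dq: "degree q = N" by (simp add: q_def degree_lagq)
    have pe: "p = q * d + r" by (simp add: d_def r_def)
    have dr: "degree r < N"
      using degree_mod_less[OF q0, of p] dq N by (auto simp: r_def)
    have dd: "degree d < N"
    proof (cases "d = 0")
      case True then show ?thesis using N by simp
    next
      case False
      have "degree (q * d) = N + degree d" using False q0 dq by (simp add: degree_mult_eq)
      moreover have "degree (q * d) \<le> max (degree p) (degree r)"
        using pe degree_diff_le_max[of p r] by (metis add_diff_cancel_right')
      ultimately show ?thesis using dp dr N by (simp add: B_def)
    qed
    have "Lf B p = Lf B (q * d) + Lf B r" using pe Lf_add by metis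
    also have "Lf B (q * d) = 0" unfolding q_def using dd by (rule lagq_orth_gen) (simp add: B_def)
    also have "Lf B r = (\<Sum>l<N. poly r (x l) / poly (lagP x N l) (x l) * Lf B (lagP x N l))"
      by (subst lagrange[OF inj dr]) (simp add: Lf_sum Lf_smult)
    also have "\<dots> = (\<Sum>l<N. w l * poly p (x l))"
    proof (intro sum.cong refl)
      fix l assume "l \<in> {..<N}"
      then have "poly q (x l) = 0" using xr by (simp add: q_def)
      then have "poly r (x l) = poly p (x l)" using pe by simp
      then show "poly r (x l) / poly (lagP x N l) (x l) * Lf B (lagP x N l) = w l * poly p (x l)"
        by (simp add: w_def)
    qed
    finally show ?thesis by simp
  qed
  have wpos: "w l > 0" if l: "l < N" for l
  proof -
    define e where "e = smult (1 / poly (lagP x N l) (x l)) (lagP x N l)"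
    have ex: "poly e (x k) = (if k = l then 1 else 0)" if "k < N" for k
      using that l lagP_self[OF inj l] lagP_other[of k N l x] by (auto simp: e_def)
    have de: "degree e \<le> N - 1" unfolding e_def
      using degree_lagP[OF l, of x] degree_smult_le order.trans by blast
    have e0: "e \<noteq> 0" using ex[OF l] by auto
    have dee: "degree (e * e) < B" using de N e0 by (simp add: degree_mult_eq B_def)
    have "Lf B (e * e) = (\<Sum>l'<N. w l' * poly (e * e) (x l'))" by (rule quad[OF dee])
    also have "\<dots> = (\<Sum>l'\<in>{l}. w l' * poly (e * e) (x l'))"
      using l by (intro sum.mono_neutral_right) (auto simp: ex)
    also have "\<dots> = w l" using ex[OF l] by simp
    finally have "Lf B (e * e) = w l" .
    moreover have "Lf B (e * e) > 0" using e0 dee by (intro Lf_pos) auto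
    ultimately show ?thesis by simp
  qed
  have mom: "(\<Sum>l<N. w l * x l ^ a) = fact a" if "a < 2 * N" for a
  proof -
    have "Lf B (monom 1 a) = fact a" using that by (simp add: Lf_monom B_def)
    moreover have "Lf B (monom 1 a) = (\<Sum>l<N. w l * x l ^ a)"
      using that by (subst quad) (auto simp: B_def degree_monom_eq poly_monom)
    ultimately show ?thesis by simp
  qed
  have "inj_on x {..<N} \<and> (\<forall>l<N. x l > 0 \<and> w l > 0) \<and>
            (\<forall>a<2*N. (\<Sum>l<N. w l * x l ^ a) = fact a)"
    using inj xr wpos mom by auto
  then show ?thesis by blast
qed

theorem theorem3p1:
  fixes m n :: nat
  assumes "m \<ge> 2" and "n \<ge> 2"
  shows "strongly_completely_positive m n (pascal_tensor m)"
proof -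
  define N where "N = m * n"
  have N1: "N \<ge> 1" using assms by (simp add: N_def)
  have nN: "n \<le> N" using assms by (simp add: N_def)
  have m0: "m > 0" using assms by simp
  obtain x w :: "nat \<Rightarrow> real" where inj: "inj_on x {..<N}" and xw: "\<And>l. l < N \<Longrightarrow> x l > 0 \<and> w l > 0"
    and mom: "\<And>a. a < 2 * N \<Longrightarrow> (\<Sum>l<N. w l * x l ^ a) = fact a"
    using quadrature[OF N1] by blast
  define \<rho> where "\<rho> l = root m (w l)" for l
  define u where "u l = (\<lambda>i. \<rho> l * x l ^ i / fact i)" for l
  define us where "us = map u [0..<N]"
  have len: "length us = N" by (simp add: us_def)
  have nth: "us ! l = u l" if "l < N" for l using that by (simp add: us_def)
  have \<rho>pos: "\<rho> l > 0" if "l < N" for l using xw[OF that] m0 by (simp add: \<rho>_def)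
  have \<rho>pow: "\<rho> l ^ m = w l" if "l < N" for l using xw[OF that] m0 by (simp add: \<rho>_def)
  have sym: "\<forall>j j'. valid_index m n j \<longrightarrow> valid_index m n j' \<longrightarrow>
        (\<exists>\<sigma>. \<sigma> permutes {..<m} \<and> (\<forall>k<m. j' k = j (\<sigma> k))) \<longrightarrow>
        pascal_tensor m j = pascal_tensor m j'"
  proof (intro allI impI)
    fix j j' :: "nat \<Rightarrow> nat"
    assume "\<exists>\<sigma>. \<sigma> permutes {..<m} \<and> (\<forall>k<m. j' k = j (\<sigma> k))"
    then obtain \<sigma> where \<sigma>: "\<sigma> permutes {..<m}" "\<And>k. k < m \<Longrightarrow> j' k = j (\<sigma> k)" by blast
    have "(\<Sum>k<m. j' k) = (\<Sum>k<m. j k)"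
      using sum.permute[OF \<sigma>(1), of j] \<sigma>(2) by (simp add: comp_def)
    moreover have "(\<Prod>k<m. fact (j' k) :: real) = (\<Prod>k<m. fact (j k))"
      using prod.permute[OF \<sigma>(1), of "\<lambda>k. fact (j k) :: real"] \<sigma>(2) by (simp add: comp_def)
    ultimately show "pascal_tensor m j = pascal_tensor m j'" by (simp add: pascal_tensor_def)
  qed
  have nonneg: "\<forall>v\<in>set us. \<forall>i<n. v i \<ge> 0"
    using xw \<rho>pos by (auto simp: us_def u_def less_imp_le)
  have tens: "\<forall>j. valid_index m n j \<longrightarrow> pascal_tensor m j = (\<Sum>v\<leftarrow>us. tensor_power m v j)"
  proof (intro allI impI)
    fix j assume vj: "valid_index m n j"
    define S where "S = (\<Sum>k<m. j k)"
    have "S \<le> (\<Sum>k<m. n)" unfolding S_def using vj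
      by (intro sum_mono) (auto simp: valid_index_def less_imp_le)
    then have "S \<le> N" by (simp add: N_def)
    then have S2: "S < 2 * N" using N1 by linarith
    have "(\<Sum>v\<leftarrow>us. tensor_power m v j) = (\<Sum>l<N. tensor_power m (u l) j)"
      by (simp add: us_def sum_list_distinct_conv_sum_set atLeast0LessThan[symmetric]
          flip: sum_set_upt_conv_sum_list_nat)
    also have "\<dots> = (\<Sum>l<N. w l * x l ^ S / (\<Prod>k<m. fact (j k)))"
    proof (intro sum.cong refl)
      fix l assume l: "l \<in> {..<N}"
      have "tensor_power m (u l) j = (\<Prod>k<m. \<rho> l * x l ^ j k / fact (j k))"
        by (simp add: tensor_power_def u_def)
      also have "\<dots> = \<rho> l ^ m * (\<Prod>k<m. x l ^ j k) / (\<Prod>k<m. fact (j k))"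
        by (simp add: prod.distrib prod_dividef)
      also have "\<dots> = w l * x l ^ S / (\<Prod>k<m. fact (j k))"
        using l \<rho>pow by (simp add: S_def power_sum)
      finally show "tensor_power m (u l) j = w l * x l ^ S / (\<Prod>k<m. fact (j k))" .
    qed
    also have "\<dots> = (\<Sum>l<N. w l * x l ^ S) / (\<Prod>k<m. fact (j k))"
      by (simp add: sum_divide_distrib)
    also have "\<dots> = pascal_tensor m j"
      using mom[OF S2] by (simp add: pascal_tensor_def S_def)
    finally show "pascal_tensor m j = (\<Sum>v\<leftarrow>us. tensor_power m v j)" by simp
  qed
  have span: "spans_Rn n us"
    unfolding spans_Rn_def
  proof
    fix y :: "nat \<Rightarrow> real"
    define Q where "Q = lagP x n"
    have injn: "inj_on x {..<n}" using inj nN by (auto intro: inj_on_subset)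
    have delta: "(\<Sum>l<n. x l ^ i / poly (Q l) (x l) * coeff (Q l) k) = (if i = k then 1 else 0)"
      if i: "i < n" for i k
    proof -
      have "monom 1 i = (\<Sum>l<n. smult (poly (monom 1 i) (x l) / poly (Q l) (x l)) (Q l))"
        unfolding Q_def using i by (intro lagrange[OF injn]) (simp add: degree_monom_eq)
      then have "coeff (monom (1::real) i) k = coeff (\<Sum>l<n. smult (poly (monom 1 i) (x l) / poly (Q l) (x l)) (Q l)) k"
        by simp
      then show ?thesis by (simp add: coeff_sum poly_monom coeff_monom)
    qed
    define c where "c l = (if l < n then (\<Sum>k<n. fact k * y k * coeff (Q l) k / poly (Q l) (x l)) / \<rho> l else 0)" for l
    show "\<exists>c. \<forall>i<n. y i = (\<Sum>l<length us. c l * (us ! l) i)"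
    proof (intro exI allI impI)
      fix i assume i: "i < n"
      have "(\<Sum>l<length us. c l * (us ! l) i) = (\<Sum>l<N. c l * u l i)"
        by (simp add: len nth)
      also have "\<dots> = (\<Sum>l<n. c l * u l i)"
        using nN by (intro sum.mono_neutral_right) (auto simp: c_def)
      also have "\<dots> = (\<Sum>l<n. (\<Sum>k<n. fact k * y k * coeff (Q l) k / poly (Q l) (x l)) * x l ^ i) / fact i"
        unfolding sum_divide_distrib
      proof (intro sum.cong refl)
        fix l assume "l \<in> {..<n}"
        then have "l < N" "l < n" using nN by auto
        then show "c l * u l i = (\<Sum>k<n. fact k * y k * coeff (Q l) k / poly (Q l) (x l)) * x l ^ i / fact i"
          using \<rho>pos[of l] by (simp add: c_def u_def)
      qed
      also have "(\<Sum>l<n. (\<Sum>k<n. fact k * y k * coeff (Q l) k / poly (Q l) (x l)) * x l ^ i)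
          = (\<Sum>k<n. fact k * y k * (\<Sum>l<n. x l ^ i / poly (Q l) (x l) * coeff (Q l) k))"
      proof -
        have "(\<Sum>l<n. (\<Sum>k<n. fact k * y k * coeff (Q l) k / poly (Q l) (x l)) * x l ^ i)
            = (\<Sum>l<n. \<Sum>k<n. fact k * y k * (x l ^ i / poly (Q l) (x l) * coeff (Q l) k))"
          unfolding sum_distrib_right by (intro sum.cong refl) (simp add: divide_inverse ac_simps)
        also have "\<dots> = (\<Sum>k<n. \<Sum>l<n. fact k * y k * (x l ^ i / poly (Q l) (x l) * coeff (Q l) k))"
          by (rule sum.swap)
        also have "\<dots> = (\<Sum>k<n. fact k * y k * (\<Sum>l<n. x l ^ i / poly (Q l) (x l) * coeff (Q l) k))"
          by (simp only: sum_distrib_left)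
        finally show ?thesis .
      qed
      also have "\<dots> = (\<Sum>k<n. fact k * y k * (if i = k then 1 else 0))"
        using delta[OF i] by simp
      also have "\<dots> = fact i * y i" using i by (simp add: if_distrib cong: if_cong)
      finally show "y i = (\<Sum>l<length us. c l * (us ! l) i)" by simp
    qed
  qed
  show ?thesis unfolding strongly_completely_positive_def
    using sym nonneg span tens by blast
qed

end
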